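(* Let $\mathcal C$ be a hereditary class of graphs with infinite VC-dimension and let $H=(H_\ell\cup H_r,E)$ be a bipartite graph with bipartition $(H_\ell,H_r)$. Then at least one of the four graphs $H^{0,0},H^{1,0},H^{0,1},H^{1,1}$ belongs to $\mathcal C$.
   Context: A class of graphs is hereditary if it is closed under isomorphism and under taking induced subgraphs. A set $X\subseteq V(G)$ is shattered if for every $S\subseteq X$ there is a vertex $v$ with $N[v]\cap X=S$ (where $N[v]$ is the closed neighbourhood); the VC-dimension of $G$ is the largest size of a shattered set; a class has infinite VC-dimension if these are unbounded over the class. For a bipartite graph $H$ with bipartition $(A,B)$: $H^{0,0}=H$; $H^{1,0}$ is obtained from $H$ by adding all edges between vertices of $A$ (making $A$ a clique); $H^{0,1}$ is obtained by making $B$ a clique; $H^{1,1}$ is obtained by making both $A$ and $B$ cliques. *)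

theory Defs
  imports Main
begin

text \<open>Vertices are natural numbers; since
  classes are closed under isomorphism, this is no loss of generality for finite graphs.\<close>

type_synonym 'a graph = "'a set \<times> ('a \<times> 'a) set"

abbreviation verts :: "'a graph \<Rightarrow> 'a set" where "verts G \<equiv> fst G"
abbreviation edges :: "'a graph \<Rightarrow> ('a \<times> 'a) set" where "edges G \<equiv> snd G"

definition is_graph :: "'a graph \<Rightarrow> bool" where
  "is_graph G \<longleftrightarrow> finite (verts G) \<and> edges G \<subseteq> verts G \<times> verts G
     \<and> (\<forall>u v. (u, v) \<in> edges G \<longrightarrow> (v, u) \<in> edges G)
     \<and> (\<forall>v. (v, v) \<notin> edges G)"

definition graph_iso :: "'a graph \<Rightarrow> 'b graph \<Rightarrow> bool" where
  "graph_iso G G' \<longleftrightarrow> (\<exists>f. bij_betw f (verts G) (verts G')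
     \<and> (\<forall>u\<in>verts G. \<forall>v\<in>verts G. (u, v) \<in> edges G \<longleftrightarrow> (f u, f v) \<in> edges G'))"

definition induced_subgraph :: "'a graph \<Rightarrow> 'a set \<Rightarrow> 'a graph" where
  "induced_subgraph G X = (X, edges G \<inter> (X \<times> X))"

definition hereditary :: "nat graph set \<Rightarrow> bool" where
  "hereditary \<C> \<longleftrightarrow> (\<forall>G\<in>\<C>. is_graph G)
     \<and> (\<forall>G\<in>\<C>. \<forall>G'. is_graph G' \<and> graph_iso G G' \<longrightarrow> G' \<in> \<C>)
     \<and> (\<forall>G\<in>\<C>. \<forall>X. X \<subseteq> verts G \<longrightarrow> induced_subgraph G X \<in> \<C>)"

definition closed_nbhd :: "'a graph \<Rightarrow> 'a \<Rightarrow> 'a set" where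
  "closed_nbhd G v = insert v {u. (v, u) \<in> edges G}"

definition shattered :: "'a graph \<Rightarrow> 'a set \<Rightarrow> bool" where
  "shattered G X \<longleftrightarrow> X \<subseteq> verts G
     \<and> (\<forall>S. S \<subseteq> X \<longrightarrow> (\<exists>v\<in>verts G. closed_nbhd G v \<inter> X = S))"

definition infinite_VC_dim :: "'a graph set \<Rightarrow> bool" where
  "infinite_VC_dim \<C> \<longleftrightarrow> (\<forall>k::nat. \<exists>G\<in>\<C>. \<exists>X. shattered G X \<and> card X \<ge> k)"

definition bipartite_with :: "'a graph \<Rightarrow> 'a set \<Rightarrow> 'a set \<Rightarrow> bool" where
  "bipartite_with H A B \<longleftrightarrow> is_graph H \<and> A \<inter> B = {} \<and> A \<union> B = verts H
     \<and> edges H \<subseteq> (A \<times> B) \<union> (B \<times> A)"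

definition make_clique :: "'a graph \<Rightarrow> 'a set \<Rightarrow> 'a graph" where
  "make_clique G A = (verts G, edges G \<union> {(u, v). u \<in> A \<and> v \<in> A \<and> u \<noteq> v})"

text \<open>H^{i,j}: i = True makes A a clique, j = True makes B a clique.\<close>
definition bip_variant :: "'a graph \<Rightarrow> 'a set \<Rightarrow> 'a set \<Rightarrow> bool \<Rightarrow> bool \<Rightarrow> 'a graph" where
  "bip_variant H A B i j =
     (let H1 = (if i then make_clique H A else H) in if j then make_clique H1 B else H1)"

end

theory Submission
  imports Defs "HOL-Library.Ramsey"
begin

lemma ramsey_hom:
  "\<exists>r. \<forall>(V::'a set) (R::('a\<times>'a) set). finite V \<and> card V \<ge> r \<and> (\<forall>u v. (u,v)\<in>R \<longrightarrow> (v,u)\<in>R) \<longrightarrow>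
     (\<exists>U\<subseteq>V. card U = m \<and> (\<exists>c. \<forall>u\<in>U. \<forall>v\<in>U. u \<noteq> v \<longrightarrow> ((u,v)\<in>R \<longleftrightarrow> c)))"
proof -
  obtain r where r: "\<forall>(V::'a set) (E::'a set set). finite V \<and> card V \<ge> r \<longrightarrow>
    (\<exists>R \<subseteq> V. card R = m \<and> clique R E \<or> card R = m \<and> indep R E)"
    using ramsey2[of m m] by blast
  show ?thesis
  proof (rule exI[of _ r], intro allI impI)
    fix V :: "'a set" and R :: "('a\<times>'a) set"
    assume a: "finite V \<and> card V \<ge> r \<and> (\<forall>u v. (u,v)\<in>R \<longrightarrow> (v,u)\<in>R)"
    define E where "E = {{u,v} | u v. (u,v)\<in>R}"
    have E: "{u,v} \<in> E \<longleftrightarrow> (u,v) \<in> R" for u v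
    proof
      assume "{u,v} \<in> E"
      then obtain x y where "{u,v} = {x,y}" "(x,y)\<in>R" by (auto simp: E_def)
      then show "(u,v)\<in>R" using a by (metis doubleton_eq_iff)
    qed (auto simp: E_def)
    from r a obtain U where U: "U \<subseteq> V" "card U = m \<and> clique U E \<or> card U = m \<and> indep U E" by blast
    from U(2) show "\<exists>U\<subseteq>V. card U = m \<and> (\<exists>c. \<forall>u\<in>U. \<forall>v\<in>U. u \<noteq> v \<longrightarrow> ((u,v)\<in>R \<longleftrightarrow> c))"
    proof
      assume "card U = m \<and> clique U E"
      then show ?thesis using U(1) by (intro exI[of _ U] conjI exI[of _ True]) (auto simp: clique_def E)
    next
      assume "card U = m \<and> indep U E"
      then show ?thesis using U(1) by (intro exI[of _ U] conjI exI[of _ False]) (auto simp: indep_def E)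
    qed
  qed
qed

lemma embed_in_class:
  fixes C :: "nat graph set" and G H' :: "nat graph"
  assumes hC: "hereditary C" and G: "G \<in> C" and H': "is_graph H'"
    and inj: "inj_on \<phi> (verts H')" and sub: "\<phi> ` verts H' \<subseteq> verts G"
    and e: "\<And>u v. u \<in> verts H' \<Longrightarrow> v \<in> verts H' \<Longrightarrow> (u,v) \<in> edges H' \<longleftrightarrow> (\<phi> u, \<phi> v) \<in> edges G"
  shows "H' \<in> C"
proof -
  let ?V = "\<phi> ` verts H'"
  have "induced_subgraph G ?V \<in> C" using hC G sub unfolding hereditary_def by blast
  moreover have "graph_iso (induced_subgraph G ?V) H'"
    unfolding graph_iso_def induced_subgraph_def
  proof (intro exI[of _ "inv_into (verts H') \<phi>"] conjI ballI)
    show "bij_betw (inv_into (verts H') \<phi>) (verts (?V, edges G \<inter> ?V \<times> ?V)) (verts H')"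
      using inj by (simp add: bij_betw_inv_into inj_on_imp_bij_betw)
    fix x y assume "x \<in> verts (?V, edges G \<inter> ?V \<times> ?V)" "y \<in> verts (?V, edges G \<inter> ?V \<times> ?V)"
    then obtain u v where "u \<in> verts H'" "v \<in> verts H'" "x = \<phi> u" "y = \<phi> v" by auto
    then show "((x, y) \<in> edges (?V, edges G \<inter> ?V \<times> ?V)) = ((inv_into (verts H') \<phi> x, inv_into (verts H') \<phi> y) \<in> edges H')"
      using inj e by auto
  qed
  ultimately show ?thesis using hC H' unfolding hereditary_def by blast
qed

lemma variant_verts: "verts (bip_variant H A B i j) = verts H"
  by (simp add: bip_variant_def make_clique_def Let_def)

lemma variant_edges: "(u,v) \<in> edges (bip_variant H A B i j) \<longleftrightarrow>
   (u,v) \<in> edges H \<or> (i \<and> u\<in>A \<and> v\<in>A \<and> u\<noteq>v) \<or> (j \<and> u\<in>B \<and> v\<in>B \<and> u\<noteq>v)"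
  by (auto simp: bip_variant_def make_clique_def Let_def)

lemma variant_graph: "bipartite_with H A B \<Longrightarrow> is_graph (bip_variant H A B i j)"
  unfolding is_graph_def bipartite_with_def variant_verts
  by (auto simp: variant_edges)

lemma main_core:
  fixes C :: "nat graph set" and H :: "nat graph" and A B :: "nat set"
  assumes hC: "hereditary C" and vc: "infinite_VC_dim C" and bip: "bipartite_with H A B"
  shows "\<exists>i j. bip_variant H A B i j \<in> C"
proof -
  have disj: "A \<inter> B = {}" and VH: "verts H = A \<union> B" and EH: "edges H \<subseteq> A \<times> B \<union> B \<times> A"
    and gH: "is_graph H" using bip unfolding bipartite_with_def by auto
  have finA: "finite A" and finB: "finite B" using gH VH unfolding is_graph_def by auto
  have symH: "\<And>u v. (u,v)\<in>edges H \<Longrightarrow> (v,u)\<in>edges H" using gH unfolding is_graph_def by blast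
  define p where "p = card A"
  define q where "q = card B"
  obtain rM where rM: "\<forall>(V::nat set) (R::(nat\<times>nat) set). finite V \<and> card V \<ge> rM \<and> (\<forall>u v. (u,v)\<in>R \<longrightarrow> (v,u)\<in>R) \<longrightarrow>
     (\<exists>U\<subseteq>V. card U = p \<and> (\<exists>c. \<forall>u\<in>U. \<forall>v\<in>U. u \<noteq> v \<longrightarrow> ((u,v)\<in>R \<longleftrightarrow> c)))"
    using ramsey_hom by blast
  define J where "J = Pow {..<rM} \<times> {..<q+2}"
  have finJ: "finite J" by (simp add: J_def)
  define m where "m = card J"
  obtain r1 where r1: "\<forall>(V::nat set) (R::(nat\<times>nat) set). finite V \<and> card V \<ge> r1 \<and> (\<forall>u v. (u,v)\<in>R \<longrightarrow> (v,u)\<in>R) \<longrightarrow>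
     (\<exists>U\<subseteq>V. card U = m \<and> (\<exists>c. \<forall>u\<in>U. \<forall>v\<in>U. u \<noteq> v \<longrightarrow> ((u,v)\<in>R \<longleftrightarrow> c)))"
    using ramsey_hom by blast
  obtain G X where G: "G \<in> C" and shX: "shattered G X" and cX: "card X \<ge> max r1 1"
    using vc[unfolded infinite_VC_dim_def, rule_format, of "max r1 1"] by blast
  have gG: "is_graph G" using hC G unfolding hereditary_def by blast
  have finX: "finite X" using cX card.infinite by fastforce
  have symG: "\<forall>u v. (u,v)\<in>edges G \<longrightarrow> (v,u)\<in>edges G" using gG unfolding is_graph_def by blast
  have irrG: "\<And>v. (v,v) \<notin> edges G" using gG unfolding is_graph_def by blast
  have "card X \<ge> r1" using cX by simp
  then obtain Y cY where YX: "Y \<subseteq> X" and cardY: "card Y = m"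
    and homY: "\<forall>u\<in>Y. \<forall>v\<in>Y. u \<noteq> v \<longrightarrow> ((u,v)\<in>edges G \<longleftrightarrow> cY)"
    using r1[rule_format, of X "edges G"] finX symG by blast
  have finY: "finite Y" using YX finX finite_subset by blast
  obtain e where e: "bij_betw e J Y" using finJ finY cardY m_def finite_same_card_bij by metis
  have einj: "inj_on e J" and eY: "e ` J = Y" using e unfolding bij_betw_def by auto
  define S where "S t = e ` {x\<in>J. t \<in> fst x}" for t
  have SY: "S t \<subseteq> Y" for t unfolding S_def using eY by auto
  have XG: "X \<subseteq> verts G" and shX': "\<And>S. S \<subseteq> X \<Longrightarrow> \<exists>v\<in>verts G. closed_nbhd G v \<inter> X = S"
    using shX unfolding shattered_def by auto
  have "\<forall>t. \<exists>v\<in>verts G. closed_nbhd G v \<inter> Y = S t"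
  proof
    fix t
    have "S t \<subseteq> X" using SY[of t] YX by (rule subset_trans)
    then obtain v where v: "v\<in>verts G" "closed_nbhd G v \<inter> X = S t" using shX'[of "S t"] by blast
    have "closed_nbhd G v \<inter> Y = (closed_nbhd G v \<inter> X) \<inter> Y" using YX by auto
    also have "\<dots> = S t" using v(2) SY[of t] by auto
    finally show "\<exists>v\<in>verts G. closed_nbhd G v \<inter> Y = S t" using v(1) by blast
  qed
  then obtain w where wG: "\<And>t. w t \<in> verts G" and wN: "\<And>t. closed_nbhd G (w t) \<inter> Y = S t" by metis
  have memS: "e x \<in> S t \<longleftrightarrow> t \<in> fst x" if "x \<in> J" for x t
    using that einj unfolding S_def by (auto simp: inj_on_def)
  have wY: "w t \<notin> Y" if t: "t < rM" for t
  proof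
    assume wt: "w t \<in> Y"
    have J1: "({t},q) \<in> J" "({t},q+1) \<in> J" "({},0) \<in> J" using t by (auto simp: J_def)
    have in1: "e({t},q) \<in> S t" "e({t},q+1) \<in> S t" using memS J1 by auto
    have ne: "e({t},q) \<noteq> e({t},q+1)" using inj_onD[OF einj _ J1(1) J1(2)] by auto
    show False
    proof (cases cY)
      case True
      have "e({},0) \<in> Y" using J1 eY by auto
      moreover have "e({},0) \<notin> S t" using memS J1 by auto
      moreover have "e({},0) \<in> closed_nbhd G (w t)"
      proof (cases "e({},0) = w t")
        case True then show ?thesis unfolding closed_nbhd_def by simp
      next
        case False
        then have "(w t, e({},0)) \<in> edges G" using homY \<open>cY\<close> wt \<open>e({},0) \<in> Y\<close> by metis
        then show ?thesis unfolding closed_nbhd_def by simp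
      qed
      ultimately show False using wN by blast
    next
      case False
      have "e({t},q) \<in> closed_nbhd G (w t)" "e({t},q+1) \<in> closed_nbhd G (w t)"
        using in1 wN by blast+
      moreover have "e({t},q) \<in> Y" "e({t},q+1) \<in> Y" using in1 SY by blast+
      ultimately have "e({t},q) = w t" "e({t},q+1) = w t"
        using homY False wt unfolding closed_nbhd_def by (metis insert_iff mem_Collect_eq)+
      then show False using ne by simp
    qed
  qed
  have winj: "inj_on w {..<rM}"
  proof (rule inj_onI)
    fix s t assume s: "s \<in> {..<rM}" and t: "t \<in> {..<rM}" and eq: "w s = w t"
    have J1: "({s},q) \<in> J" using s by (auto simp: J_def)
    have "e({s},q) \<in> S s" using memS J1 by auto
    then have "e({s},q) \<in> S t" using wN eq by metis
    then show "s = t" using memS J1 by auto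
  qed
  define R' where "R' = {(s,t). (w s, w t) \<in> edges G}"
  have "\<exists>U\<subseteq>{..<rM}. card U = p \<and> (\<exists>c. \<forall>u\<in>U. \<forall>v\<in>U. u \<noteq> v \<longrightarrow> ((u,v)\<in>R' \<longleftrightarrow> c))"
    using rM[rule_format, of "{..<rM}" R'] symG unfolding R'_def by auto
  then obtain T' cA where T'M: "T' \<subseteq> {..<rM}" and cT': "card T' = p"
    and homT: "\<forall>u\<in>T'. \<forall>v\<in>T'. u \<noteq> v \<longrightarrow> ((w u, w v)\<in>edges G \<longleftrightarrow> cA)"
    unfolding R'_def by auto
  have finT: "finite T'" using T'M finite_subset by blast
  obtain \<alpha> where \<alpha>: "bij_betw \<alpha> A T'" using finA finT cT' p_def finite_same_card_bij by metis
  obtain \<beta> where \<beta>: "bij_betw \<beta> B {..<q}" using finB q_def finite_same_card_bij by (metis card_lessThan finite_lessThan)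
  have \<alpha>inj: "inj_on \<alpha> A" and \<alpha>T: "\<alpha> ` A = T'" using \<alpha> unfolding bij_betw_def by auto
  have \<beta>inj: "inj_on \<beta> B" and \<beta>q: "\<beta> ` B = {..<q}" using \<beta> unfolding bij_betw_def by auto
  define P where "P b = \<alpha> ` {a \<in> A. (a,b) \<in> edges H}" for b
  define \<phi> where "\<phi> x = (if x \<in> A then w (\<alpha> x) else e (P x, \<beta> x))" for x
  have PJ: "(P b, \<beta> b) \<in> J" if "b \<in> B" for b
  proof -
    have "\<beta> b < q" using that \<beta>q by auto
    then show ?thesis using that \<alpha>T T'M unfolding J_def P_def by auto
  qed
  have eBY: "e (P b, \<beta> b) \<in> Y" if "b \<in> B" for b using PJ[OF that] eY by auto
  have \<alpha>M: "\<alpha> a < rM" if "a \<in> A" for a using that \<alpha>T T'M by auto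
  have key: "(w (\<alpha> a), e (P b, \<beta> b)) \<in> edges G \<longleftrightarrow> (a,b) \<in> edges H" if a: "a \<in> A" and b: "b \<in> B" for a b
  proof -
    have ne: "w (\<alpha> a) \<noteq> e (P b, \<beta> b)" using wY[OF \<alpha>M[OF a]] eBY[OF b] by metis
    have "(w (\<alpha> a), e (P b, \<beta> b)) \<in> edges G \<longleftrightarrow> e (P b, \<beta> b) \<in> closed_nbhd G (w (\<alpha> a))"
      using ne unfolding closed_nbhd_def by auto
    also have "\<dots> \<longleftrightarrow> e (P b, \<beta> b) \<in> S (\<alpha> a)" using wN eBY[OF b] by blast
    also have "\<dots> \<longleftrightarrow> \<alpha> a \<in> P b" using memS[OF PJ[OF b]] by simp
    also have "\<dots> \<longleftrightarrow> (a,b) \<in> edges H" using \<alpha>inj a unfolding P_def by (auto simp: inj_on_def)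
    finally show ?thesis .
  qed
  have "bip_variant H A B cA cY \<in> C"
  proof (rule embed_in_class[OF hC G variant_graph[OF bip], of \<phi>])
    show "inj_on \<phi> (verts (bip_variant H A B cA cY))"
      unfolding variant_verts VH
    proof (rule inj_onI)
      fix x y assume x: "x \<in> A \<union> B" and y: "y \<in> A \<union> B" and eq: "\<phi> x = \<phi> y"
      show "x = y"
      proof (cases "x \<in> A"; cases "y \<in> A")
        assume "x \<in> A" "y \<in> A"
        then show ?thesis using eq winj \<alpha>inj \<alpha>M unfolding \<phi>_def by (auto simp: inj_on_def)
      next
        assume "x \<in> A" "y \<notin> A"
        then show ?thesis using eq wY[OF \<alpha>M] eBY y unfolding \<phi>_def by (metis UnE)
      next
        assume "x \<notin> A" "y \<in> A"
        then show ?thesis using eq wY[OF \<alpha>M] eBY x unfolding \<phi>_def by (metis UnE)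
      next
        assume xa: "x \<notin> A" "y \<notin> A"
        then have "x \<in> B" "y \<in> B" using x y by auto
        then have "(P x, \<beta> x) = (P y, \<beta> y)" using eq xa einj PJ unfolding \<phi>_def inj_on_def by auto
        then show ?thesis using \<beta>inj \<open>x \<in> B\<close> \<open>y \<in> B\<close> by (auto simp: inj_on_def)
      qed
    qed
    show "\<phi> ` verts (bip_variant H A B cA cY) \<subseteq> verts G"
      unfolding variant_verts VH using wG eBY YX XG unfolding \<phi>_def by auto
    fix u v assume "u \<in> verts (bip_variant H A B cA cY)" "v \<in> verts (bip_variant H A B cA cY)"
    then have u: "u \<in> A \<union> B" and v: "v \<in> A \<union> B" unfolding variant_verts VH by auto
    show "(u, v) \<in> edges (bip_variant H A B cA cY) \<longleftrightarrow> (\<phi> u, \<phi> v) \<in> edges G"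
      unfolding variant_edges
    proof (cases "u \<in> A"; cases "v \<in> A")
      assume ua: "u \<in> A" and va: "v \<in> A"
      have "(u,v) \<notin> edges H" using EH ua va disj by auto
      moreover have "u \<notin> B" using ua disj by auto
      moreover have "(\<phi> u, \<phi> v) \<in> edges G \<longleftrightarrow> cA \<and> u \<noteq> v"
      proof (cases "u = v")
        case True then show ?thesis using irrG by auto
      next
        case False
        then have "\<alpha> u \<noteq> \<alpha> v" using \<alpha>inj ua va by (auto simp: inj_on_def)
        then show ?thesis using homT \<alpha>T ua va False unfolding \<phi>_def by auto
      qed
      ultimately show "((u, v) \<in> edges H \<or> cA \<and> u \<in> A \<and> v \<in> A \<and> u \<noteq> v \<or> cY \<and> u \<in> B \<and> v \<in> B \<and> u \<noteq> v) \<longleftrightarrow> (\<phi> u, \<phi> v) \<in> edges G"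
        using ua va by auto
    next
      assume ua: "u \<in> A" and va: "v \<notin> A"
      then have vb: "v \<in> B" and ub: "u \<notin> B" using v disj by auto
      show "((u, v) \<in> edges H \<or> cA \<and> u \<in> A \<and> v \<in> A \<and> u \<noteq> v \<or> cY \<and> u \<in> B \<and> v \<in> B \<and> u \<noteq> v) \<longleftrightarrow> (\<phi> u, \<phi> v) \<in> edges G"
        using key[OF ua vb] ua va ub unfolding \<phi>_def by auto
    next
      assume ua: "u \<notin> A" and va: "v \<in> A"
      then have ub: "u \<in> B" and vb: "v \<notin> B" using u disj by auto
      have "(\<phi> u, \<phi> v) \<in> edges G \<longleftrightarrow> (\<phi> v, \<phi> u) \<in> edges G" using symG by blast
      moreover have "(u,v) \<in> edges H \<longleftrightarrow> (v,u) \<in> edges H" using symH by blast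
      ultimately show "((u, v) \<in> edges H \<or> cA \<and> u \<in> A \<and> v \<in> A \<and> u \<noteq> v \<or> cY \<and> u \<in> B \<and> v \<in> B \<and> u \<noteq> v) \<longleftrightarrow> (\<phi> u, \<phi> v) \<in> edges G"
        using key[OF va ub] ua va vb unfolding \<phi>_def by auto
    next
      assume ua: "u \<notin> A" and va: "v \<notin> A"
      then have ub: "u \<in> B" and vb: "v \<in> B" using u v by auto
      have "(u,v) \<notin> edges H" using EH ub vb disj by auto
      moreover have "(\<phi> u, \<phi> v) \<in> edges G \<longleftrightarrow> cY \<and> u \<noteq> v"
      proof (cases "u = v")
        case True then show ?thesis using irrG by auto
      next
        case False
        then have "(P u, \<beta> u) \<noteq> (P v, \<beta> v)" using \<beta>inj ub vb by (auto simp: inj_on_def)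
        then have "e (P u, \<beta> u) \<noteq> e (P v, \<beta> v)" using einj PJ ub vb by (auto simp: inj_on_def)
        then show ?thesis using homY eBY ub vb ua va False unfolding \<phi>_def by auto
      qed
      ultimately show "((u, v) \<in> edges H \<or> cA \<and> u \<in> A \<and> v \<in> A \<and> u \<noteq> v \<or> cY \<and> u \<in> B \<and> v \<in> B \<and> u \<noteq> v) \<longleftrightarrow> (\<phi> u, \<phi> v) \<in> edges G"
        using ua va ub vb by auto
    qed
  qed
  then show ?thesis by blast
qed

theorem mainTheorem7:
  fixes \<C> :: "nat graph set" and H :: "nat graph" and A B :: "nat set"
  assumes "hereditary \<C>"
    and "infinite_VC_dim \<C>"
    and "bipartite_with H A B"
  shows "bip_variant H A B False False \<in> \<C> \<or> bip_variant H A B True False \<in> \<C>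
       \<or> bip_variant H A B False True \<in> \<C> \<or> bip_variant H A B True True \<in> \<C>"
proof -
  obtain i j where "bip_variant H A B i j \<in> \<C>" using main_core[OF assms] by blast
  then show ?thesis by (cases i; cases j) auto
qed

end
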